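(* Fix $\alpha\in(0,1)$ and $\nu\in(0,\alpha)$, and suppose the confidence regions at level $\alpha-\nu$, $\{C^{(\alpha-\nu)}_{\gamma\cdot\Gamma'}\}_{\Gamma'\subseteq\Gamma}$, are nested. Define the data-dependent set of targets $$\widehat\Gamma^+_\nu=\widehat\Gamma^+_\nu(y)=\bigcup_{P'\in B_\nu(y)}\Gamma_\nu(P')=\bigcup_{P'\in B_\nu(y)}\ \bigcup_{y'\in A_\nu(P')}\widehat\Gamma(y').$$ Then for every $P\in\mathcal P$, when $y\sim P$, $$P\left\{\theta_\gamma(P)\in C^{(\alpha-\nu)}_{\gamma\cdot\widehat\Gamma^+_\nu},\ \forall\gamma\in\widehat\Gamma(y)\right\}\ge 1-\alpha.$$
   Context: Let $\mathcal P$ be a (possibly nonparametric) family of distributions of an observation $y$. There is an index set $\Gamma$ of targets, and for each $P\in\mathcal P$ a family of estimands $\{\theta_\gamma(P)\}_{\gamma\in\Gamma}$. A selection rule $y\mapsto\widehat\Gamma(y)\subseteq\Gamma$ chooses a data-dependent set of targets. For every subset $\Gamma'\subseteq\Gamma$ and every level $\beta\in(0,1)$ we have confidence regions $\{C^{\beta}_{\gamma\cdot\Gamma'}\}_{\gamma\in\Gamma'}$ (functions of $y$) that are simultaneously valid: for every $P\in\mathcal P$, $P\{\theta_\gamma(P)\in C^{\beta}_{\gamma\cdot\Gamma'}\ \forall\gamma\in\Gamma'\}\ge1-\beta$. The regions at level $\beta$ are called nested if for all $\Gamma_1\subseteq\Gamma_2\subseteq\Gamma$ and all $\gamma\in\Gamma_1$,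 $C^\beta_{\gamma\cdot\Gamma_1}\subseteq C^\beta_{\gamma\cdot\Gamma_2}$. For each $P\in\mathcal P$ and $\nu\in(0,1)$, $A_\nu(P)$ is a set of observations with $P\{y\in A_\nu(P)\}\ge1-\nu$ (an acceptance region). The set of plausible targets under $P$ is $\Gamma_\nu(P)=\bigcup_{y'\in A_\nu(P)}\widehat\Gamma(y')$, and the inversion is $B_\nu(y)=\{P\in\mathcal P: y\in A_\nu(P)\}$. *)

theory Defs
  imports "HOL-Probability.Probability"
begin

definition plausible_targets ::
  "('y \<Rightarrow> 'g set) \<Rightarrow> (real \<Rightarrow> 'y measure \<Rightarrow> 'y set) \<Rightarrow> real \<Rightarrow> 'y measure \<Rightarrow> 'g set" where
  "plausible_targets Ghat A \<nu> P = (\<Union>y'\<in>A \<nu> P. Ghat y')"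

definition inversion ::
  "'y measure set \<Rightarrow> (real \<Rightarrow> 'y measure \<Rightarrow> 'y set) \<Rightarrow> real \<Rightarrow> 'y \<Rightarrow> 'y measure set" where
  "inversion \<P> A \<nu> y = {P \<in> \<P>. y \<in> A \<nu> P}"

definition Gamma_plus ::
  "'y measure set \<Rightarrow> ('y \<Rightarrow> 'g set) \<Rightarrow> (real \<Rightarrow> 'y measure \<Rightarrow> 'y set) \<Rightarrow> real \<Rightarrow> 'y \<Rightarrow> 'g set" where
  "Gamma_plus \<P> Ghat A \<nu> y = (\<Union>P'\<in>inversion \<P> A \<nu> y. plausible_targets Ghat A \<nu> P')"

definition nested ::
  "'g set \<Rightarrow> (real \<Rightarrow> 'g set \<Rightarrow> 'g \<Rightarrow> 'y \<Rightarrow> 'e set) \<Rightarrow> real \<Rightarrow> bool" where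
  "nested \<Gamma> C \<beta> = (\<forall>\<Gamma>1 \<Gamma>2 \<gamma> y. \<Gamma>1 \<subseteq> \<Gamma>2 \<longrightarrow> \<Gamma>2 \<subseteq> \<Gamma> \<longrightarrow> \<gamma> \<in> \<Gamma>1 \<longrightarrow>
      C \<beta> \<Gamma>1 \<gamma> y \<subseteq> C \<beta> \<Gamma>2 \<gamma> y)"

end

theory Submission
  imports Defs
begin

theorem theorem1:
  fixes \<P> :: "'y measure set"
    and \<Gamma> :: "'g set"
    and \<theta> :: "'y measure \<Rightarrow> 'g \<Rightarrow> 'e"
    and Ghat :: "'y \<Rightarrow> 'g set"
    and C :: "real \<Rightarrow> 'g set \<Rightarrow> 'g \<Rightarrow> 'y \<Rightarrow> 'e set"
    and A :: "real \<Rightarrow> 'y measure \<Rightarrow> 'y set"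
    and \<alpha> \<nu> :: real
  assumes probs: "\<And>P. P \<in> \<P> \<Longrightarrow> prob_space P"
    and sel: "\<And>y. Ghat y \<subseteq> \<Gamma>"
    and valid: "\<And>P \<Gamma>' \<beta>. P \<in> \<P> \<Longrightarrow> \<Gamma>' \<subseteq> \<Gamma> \<Longrightarrow> 0 < \<beta> \<Longrightarrow> \<beta> < 1 \<Longrightarrow>
        measure P {y \<in> space P. \<forall>\<gamma>\<in>\<Gamma>'. \<theta> P \<gamma> \<in> C \<beta> \<Gamma>' \<gamma> y} \<ge> 1 - \<beta>"
    and accept: "\<And>P \<mu>. P \<in> \<P> \<Longrightarrow> 0 < \<mu> \<Longrightarrow> \<mu> < 1 \<Longrightarrow>
        measure P {y \<in> space P. y \<in> A \<mu> P} \<ge> 1 - \<mu>"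
    and alpha: "0 < \<alpha>" "\<alpha> < 1"
    and nu: "0 < \<nu>" "\<nu> < \<alpha>"
    and nest: "nested \<Gamma> C (\<alpha> - \<nu>)"
    and P: "P \<in> \<P>"
  shows "\<exists>E \<in> sets P. E \<subseteq> {y \<in> space P. \<forall>\<gamma>\<in>Ghat y.
            \<theta> P \<gamma> \<in> C (\<alpha> - \<nu>) (Gamma_plus \<P> Ghat A \<nu> y) \<gamma> y}
         \<and> measure P E \<ge> 1 - \<alpha>"
proof -
  interpret p: prob_space P using probs P by blast
  define \<Gamma>0 where "\<Gamma>0 = plausible_targets Ghat A \<nu> P"
  have G0: "\<Gamma>0 \<subseteq> \<Gamma>" using sel unfolding \<Gamma>0_def plausible_targets_def by blast
  define G where "G = {y \<in> space P. \<forall>\<gamma>\<in>\<Gamma>0. \<theta> P \<gamma> \<in> C (\<alpha> - \<nu>) \<Gamma>0 \<gamma> y}"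
  define S where "S = {y \<in> space P. y \<in> A \<nu> P}"
  have mG: "measure P G \<ge> 1 - (\<alpha> - \<nu>)" unfolding G_def
    using valid[OF P G0, of "\<alpha> - \<nu>"] alpha nu by auto
  have mS: "measure P S \<ge> 1 - \<nu>" unfolding S_def
    using accept[OF P, of \<nu>] alpha nu by auto
  have Gs: "G \<in> sets P"
  proof (rule ccontr)
    assume "G \<notin> sets P" then have "measure P G = 0" by (simp add: measure_notin_sets)
    with mG alpha nu show False by linarith
  qed
  have Ss: "S \<in> sets P"
  proof (rule ccontr)
    assume "S \<notin> sets P" then have "measure P S = 0" by (simp add: measure_notin_sets)
    with mS alpha nu show False by linarith
  qed
  have un: "measure P (G \<union> S) \<le> 1" by simp
  have "measure P (G \<union> S) + measure P (G \<inter> S) = measure P G + measure P S"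
    using Gs Ss p.finite_measure_Union'[OF Gs Ss] p.finite_measure_Diff'[OF Ss Gs] by (simp add: Int_commute)
  hence mE: "measure P (G \<inter> S) \<ge> 1 - \<alpha>" using un mG mS by linarith
  have sub: "G \<inter> S \<subseteq> {y \<in> space P. \<forall>\<gamma>\<in>Ghat y.
            \<theta> P \<gamma> \<in> C (\<alpha> - \<nu>) (Gamma_plus \<P> Ghat A \<nu> y) \<gamma> y}"
  proof safe
    fix y assume y: "y \<in> G" "y \<in> S"
    then show "y \<in> space P" by (simp add: G_def)
    fix \<gamma> assume g: "\<gamma> \<in> Ghat y"
    have yA: "y \<in> A \<nu> P" using y by (simp add: S_def)
    have g0: "\<gamma> \<in> \<Gamma>0" using g yA unfolding \<Gamma>0_def plausible_targets_def by blast
    have inv: "P \<in> inversion \<P> A \<nu> y" using P yA by (simp add: inversion_def)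
    have sub1: "\<Gamma>0 \<subseteq> Gamma_plus \<P> Ghat A \<nu> y"
      using inv unfolding \<Gamma>0_def Gamma_plus_def by blast
    have sub2: "Gamma_plus \<P> Ghat A \<nu> y \<subseteq> \<Gamma>"
      using sel unfolding Gamma_plus_def plausible_targets_def by blast
    have "\<theta> P \<gamma> \<in> C (\<alpha> - \<nu>) \<Gamma>0 \<gamma> y" using y g0 by (simp add: G_def)
    moreover have "C (\<alpha> - \<nu>) \<Gamma>0 \<gamma> y \<subseteq> C (\<alpha> - \<nu>) (Gamma_plus \<P> Ghat A \<nu> y) \<gamma> y"
      using nest sub1 sub2 g0 unfolding nested_def by blast
    ultimately show "\<theta> P \<gamma> \<in> C (\<alpha> - \<nu>) (Gamma_plus \<P> Ghat A \<nu> y) \<gamma> y" by blast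
  qed
  show ?thesis using Gs Ss sub mE by blast
qed

end
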